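(* For all metric balls $\Theta$ in $\mathbb S^1_\omega$ and $\mathcal D'$ in $K_\omega$ with radius less than $1$, the family $(P^-_\Theta A_nU^+_{\mathcal D'})_{n\in\mathbb N}$ is $0$-Lipschitz well-rounded with respect to $(\mathcal V_\epsilon)_{\epsilon>0}$; that is, there exist $\epsilon_0>0$ and $n_0\in\mathbb N$ such that for all $\epsilon\in\,]0,\epsilon_0[$ and $n\ge n_0$, $\mu_G\big((P^-_\Theta A_nU^+_{\mathcal D'})^{+\epsilon}\big)\le\mu_G\big((P^-_\Theta A_nU^+_{\mathcal D'})^{-\epsilon}\big)$.
   Context: $K_\omega$ is the completion of a global function field over $\mathbb F_q$ at a normalized discrete valuation $\omega$; $\mathcal O_\omega$ is its valuation ring, $\pi_\omega$ a fixed uniformizer, $q_\omega$ the order of the residue field, $|x|_\omega=q_\omega^{-\omega(x)}$. $K_\omega^2$ carries the supremum norm $\|(x,y)\|_\omega=\max\{|x|_\omega,|y|_\omega\}$ and $\mathbb S^1_\omega$ is its unit sphere; balls are for the induced ultrametric. $G=\mathrm{SL}_2(K_\omega)$ with Haar measure $\mu_G$. $P^-$ is the lower triangular subgroup, $P^-(\mathcal O_\omega)=P^-\cap\mathcal M_2(\mathcal O_\omega)$; $P^-_\Theta$ is the set of elements of $P^-(\mathcal O_\omega)$ whose first column lies in $\Theta$; $A_n=\{\mathrm{diag}(\pi_\omega^{-n},\pi_\omega^n)\}$; $U^+_{\mathcal D'}=\{\begin{pmatrix}1&\gamma\\0&1\end{pmatrix}:\gamma\in\mathcal D'\}$. For $\epsilon>0$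 let $N_\epsilon=\lfloor-\log_{q_\omega}\epsilon\rfloor$, and let $\mathcal V_\epsilon=\mathrm{SL}_2(\mathcal O_\omega)$ if $\epsilon>1/q_\omega$, and otherwise $\mathcal V_\epsilon=\ker(\mathrm{SL}_2(\mathcal O_\omega)\to\mathrm{SL}_2(\mathcal O_\omega/\pi_\omega^{N_\epsilon}\mathcal O_\omega))$. For $\mathcal B\subset G$: $\mathcal B^{+\epsilon}=\mathcal V_\epsilon\mathcal B\mathcal V_\epsilon=\bigcup_{g,h\in\mathcal V_\epsilon}g\mathcal Bh$ and $\mathcal B^{-\epsilon}=\bigcap_{g,h\in\mathcal V_\epsilon}g\mathcal Bh$. *)

theory Defs
  imports "HOL-Analysis.Analysis" "HOL-Computational_Algebra.Formal_Laurent_Series"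
begin

(* The local field K_omega is modelled as the Laurent series field 'k fls over a
   finite field 'k (the residue field, of order q_omega = CARD('k)); the normalized
   discrete valuation is fls_subdegree. *)

type_synonym 'k mat2 = "'k fls ^ 2 ^ 2"

definition absv :: "'k::{finite,field} fls \<Rightarrow> real" where
  "absv x = (if x = 0 then 0 else real CARD('k) powr (- real_of_int (fls_subdegree x)))"

definition valring :: "'k::{finite,field} fls set" where
  "valring = {x. absv x \<le> 1}"

definition norm2 :: "'k::{finite,field} fls \<times> 'k fls \<Rightarrow> real" where
  "norm2 v = max (absv (fst v)) (absv (snd v))"

definition sphere1 :: "('k::{finite,field} fls \<times> 'k fls) set" where
  "sphere1 = {v. norm2 v = 1}"

definition is_sphere_ball :: "('k::{finite,field} fls \<times> 'k fls) set \<Rightarrow> real \<Rightarrow> bool" where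
  "is_sphere_ball \<Theta> r \<longleftrightarrow> r > 0 \<and>
     (\<exists>c\<in>sphere1. \<Theta> = {v\<in>sphere1. norm2 (fst v - fst c, snd v - snd c) < r})"

definition is_field_ball :: "'k::{finite,field} fls set \<Rightarrow> real \<Rightarrow> bool" where
  "is_field_ball D r \<longleftrightarrow> r > 0 \<and> (\<exists>c. D = {x. absv (x - c) < r})"

definition SL2 :: "'k::{finite,field} mat2 set" where
  "SL2 = {g. det g = 1}"

definition SL2O :: "'k::{finite,field} mat2 set" where
  "SL2O = {g\<in>SL2. \<forall>i j. g$i$j \<in> valring}"

definition matdist :: "'k::{finite,field} mat2 \<Rightarrow> 'k mat2 \<Rightarrow> real" where
  "matdist g h = Max {absv (g$i$j - h$i$j) | i j. True}"

definition SL2_top :: "'k::{finite,field} mat2 topology" where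
  "SL2_top = Metric_space.mtopology SL2 matdist"

(* Haar measures on G: left-invariant Borel measures, finite on compact sets and
   positive on non-empty open sets (G is second countable, locally compact,
   so such measures are automatically Radon). *)
definition haar_SL2 :: "'k::{finite,field} mat2 measure \<Rightarrow> bool" where
  "haar_SL2 \<mu> \<longleftrightarrow>
     space \<mu> = SL2 \<and> sets \<mu> = sigma_sets SL2 {U. openin SL2_top U} \<and>
     (\<forall>g\<in>SL2. \<forall>A\<in>sets \<mu>. emeasure \<mu> ((\<lambda>h. g ** h) ` A) = emeasure \<mu> A) \<and>
     (\<forall>C. compactin SL2_top C \<longrightarrow> emeasure \<mu> C < \<infinity>) \<and>
     (\<forall>U. openin SL2_top U \<and> U \<noteq> {} \<longrightarrow> emeasure \<mu> U > 0)"

definition uniformizer :: "'k::{finite,field} fls \<Rightarrow> bool" where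
  "uniformizer \<pi> \<longleftrightarrow> fls_subdegree \<pi> = 1 \<and> \<pi> \<noteq> 0"

definition Pminus_Theta :: "('k::{finite,field} fls \<times> 'k fls) set \<Rightarrow> 'k mat2 set" where
  "Pminus_Theta \<Theta> = {g\<in>SL2O. g$1$2 = 0 \<and> (g$1$1, g$2$1) \<in> \<Theta>}"

definition a_n :: "'k::{finite,field} fls \<Rightarrow> nat \<Rightarrow> 'k mat2" where
  "a_n \<pi> n = (\<chi> i j. if i = j then (if i = 1 then inverse \<pi> ^ n else \<pi> ^ n) else 0)"

definition Uplus :: "'k::{finite,field} fls set \<Rightarrow> 'k mat2 set" where
  "Uplus D = {(\<chi> i j. if i = j then 1 else if i = 1 \<and> j = 2 then \<gamma> else 0) | \<gamma>. \<gamma> \<in> D}"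

definition PAU :: "'k::{finite,field} fls \<Rightarrow> ('k fls \<times> 'k fls) set \<Rightarrow> 'k fls set \<Rightarrow> nat \<Rightarrow> 'k mat2 set" where
  "PAU \<pi> \<Theta> D n = {p ** a_n \<pi> n ** u | p u. p \<in> Pminus_Theta \<Theta> \<and> u \<in> Uplus D}"

definition N_eps :: "'k::{finite,field} itself \<Rightarrow> real \<Rightarrow> int" where
  "N_eps _ \<epsilon> = \<lfloor>- log (real CARD('k)) \<epsilon>\<rfloor>"

definition V_eps :: "real \<Rightarrow> 'k::{finite,field} mat2 set" where
  "V_eps \<epsilon> = (if \<epsilon> > 1 / real CARD('k) then SL2O
     else {g\<in>SL2O. \<forall>i j. fls_subdegree (g$i$j - (if i = j then 1 else 0)) \<ge> N_eps TYPE('k) \<epsilon>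
                          \<or> g$i$j - (if i = j then 1 else 0) = 0})"

definition thicken :: "real \<Rightarrow> 'k::{finite,field} mat2 set \<Rightarrow> 'k mat2 set" where
  "thicken \<epsilon> B = {g ** b ** h | g b h. g \<in> V_eps \<epsilon> \<and> b \<in> B \<and> h \<in> V_eps \<epsilon>}"

definition thin :: "real \<Rightarrow> 'k::{finite,field} mat2 set \<Rightarrow> 'k mat2 set" where
  "thin \<epsilon> B = {x. \<forall>g\<in>V_eps \<epsilon>. \<forall>h\<in>V_eps \<epsilon>. x \<in> (\<lambda>b. g ** b ** h) ` B}"

end

theory Submission
  imports Defs
begin

no_notation fps_nth (infixl \<open>$\<close> 75)


lemma card_ge2: "real CARD('k::{finite,field}) \<ge> 2"
proof -
  have "{0::'k, 1} \<subseteq> UNIV" by simp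
  hence "card {0::'k,1} \<le> CARD('k)" by (intro card_mono) auto
  thus ?thesis by simp
qed

lemma absv_0[simp]: "absv (0::'k::{finite,field} fls) = 0" by (simp add: absv_def)
lemma absv_nonneg[simp]: "absv (x::'k::{finite,field} fls) \<ge> 0" by (simp add: absv_def)
lemma absv_eq0[simp]: "absv (x::'k::{finite,field} fls) = 0 \<longleftrightarrow> x = 0"
  using card_ge2[where 'k='k] by (simp add: absv_def)
lemma absv_pos: "x \<noteq> 0 \<Longrightarrow> absv (x::'k::{finite,field} fls) > 0"
  using absv_nonneg[of x] absv_eq0[of x] by linarith
lemma absv_1[simp]: "absv (1::'k::{finite,field} fls) = 1" by (simp add: absv_def)
lemma absv_uminus[simp]: "absv (- x::'k::{finite,field} fls) = absv x" by (simp add: absv_def)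
lemma absv_commute: "absv (x - y::'k::{finite,field} fls) = absv (y - x)"
  by (metis absv_uminus minus_diff_eq)
lemma absv_mult: "absv (x * y::'k::{finite,field} fls) = absv x * absv y"
  using card_ge2[where 'k='k]
  by (auto simp add: absv_def powr_add[symmetric] algebra_simps)

lemma absv_ultra: "absv (x + y::'k::{finite,field} fls) \<le> max (absv x) (absv y)"
proof (cases "x = 0 \<or> y = 0 \<or> x + y = 0")
  case True thus ?thesis using absv_nonneg[of x] absv_nonneg[of y] by (auto simp: le_max_iff_disj)
next
  case False
  hence m: "fls_subdegree (x+y) \<ge> min (fls_subdegree x) (fls_subdegree y)"
    by (intro fls_plus_subdegree) auto
  have q: "real CARD('k) > 1" using card_ge2[where 'k='k] by linarith
  show ?thesis
  proof (cases "fls_subdegree x \<le> fls_subdegree y")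
    case True
    hence "absv (x+y) \<le> absv x" using False m q by (auto simp: absv_def)
    thus ?thesis by simp
  next
    case f2: False
    hence "absv (x+y) \<le> absv y" using False m q by (auto simp: absv_def)
    thus ?thesis by simp
  qed
qed

lemma absv_ultra_diff: "absv (x - y::'k::{finite,field} fls) \<le> max (absv x) (absv y)"
  using absv_ultra[of x "-y"] by simp

lemma absv_strict: "absv (y::'k::{finite,field} fls) < absv x \<Longrightarrow> absv (x + y) = absv x"
proof -
  assume a: "absv y < absv x"
  have "absv x \<le> max (absv (x+y)) (absv (-y))" using absv_ultra[of "x+y" "-y"] by simp
  moreover have "absv (x+y) \<le> max (absv x) (absv y)" by (rule absv_ultra)
  ultimately show ?thesis using a by auto
qed

lemma absv_inverse: "absv (inverse x::'k::{finite,field} fls) = inverse (absv x)"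
proof (cases "x = 0")
  case False
  have "absv (inverse x) * absv x = 1" using absv_mult[of "inverse x" x] False by simp
  thus ?thesis by (metis inverse_unique mult.commute)
qed simp

lemma absv_divide: "absv (x / y::'k::{finite,field} fls) = absv x / absv y"
  by (simp add: divide_inverse absv_mult absv_inverse)

lemma absv_power: "absv (x ^ n::'k::{finite,field} fls) = absv x ^ n"
  by (induction n) (auto simp: absv_mult)

lemma absv_uniformizer: "uniformizer \<pi> \<Longrightarrow> absv (\<pi>::'k::{finite,field} fls) = 1 / real CARD('k)"
  by (simp add: uniformizer_def absv_def powr_minus inverse_eq_divide)





lemma mmult2: "((A::'a::semiring_1^2^'m) ** B) $ i $ j = A$i$1 * B$1$j + A$i$2 * B$2$j"
  by (simp add: matrix_matrix_mult_def sum_2)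

definition mk2 :: "'a \<Rightarrow> 'a \<Rightarrow> 'a \<Rightarrow> 'a \<Rightarrow> 'a^2^2" where
  "mk2 a b c d = (\<chi> i j. if i = 1 then (if j = 1 then a else b) else (if j = 1 then c else d))"

lemma mk2_simps[simp]: "mk2 a b c d $ 1 $ 1 = a" "mk2 a b c d $ 1 $ 2 = b"
   "mk2 a b c d $ 2 $ 1 = c" "mk2 a b c d $ 2 $ 2 = d"
  by (simp_all add: mk2_def)

lemma mat2_eqI: "A$1$1 = B$1$1 \<Longrightarrow> A$1$2 = B$1$2 \<Longrightarrow> A$2$1 = B$2$1 \<Longrightarrow> A$2$2 = B$2$2 \<Longrightarrow> A = (B::'a^2^2)"
  by (simp add: vec_eq_iff forall_2)

lemma a_n_simps[simp]: "a_n \<pi> n $ 1 $ 1 = inverse \<pi> ^ n" "a_n \<pi> n $ 1 $ 2 = 0"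
  "a_n \<pi> n $ 2 $ 1 = 0" "a_n \<pi> n $ 2 $ 2 = \<pi> ^ n"
  by (simp_all add: a_n_def)

definition Cset :: "'k::{finite,field} fls \<Rightarrow> ('k fls \<times> 'k fls) set \<Rightarrow> 'k fls set \<Rightarrow> nat \<Rightarrow> 'k mat2 set" where
  "Cset \<pi> \<Theta> D n = {g. det g = 1 \<and> absv (\<pi>^n * g$1$1) = 1 \<and> (\<pi>^n * g$1$1, \<pi>^n * g$2$1) \<in> \<Theta>
      \<and> g$1$2 / g$1$1 \<in> D}"

lemma norm2_le1: "v \<in> sphere1 \<Longrightarrow> absv (fst v) \<le> 1 \<and> absv (snd v) \<le> 1"
  by (auto simp: sphere1_def norm2_def)

lemma PAU_eq:
  fixes \<pi> :: "'k::{finite,field} fls"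
  assumes pi: "uniformizer \<pi>" and Th: "\<Theta> \<subseteq> sphere1"
  shows "PAU \<pi> \<Theta> D n = Cset \<pi> \<Theta> D n"
proof
  have pi0: "\<pi> \<noteq> 0" using pi by (simp add: uniformizer_def)
  show "PAU \<pi> \<Theta> D n \<subseteq> Cset \<pi> \<Theta> D n"
  proof
    fix g assume "g \<in> PAU \<pi> \<Theta> D n"
    then obtain p u where g: "g = p ** a_n \<pi> n ** u" and p: "p \<in> Pminus_Theta \<Theta>" and u: "u \<in> Uplus D"
      unfolding PAU_def by blast
    from u obtain \<gamma> where ga: "\<gamma> \<in> D" and u: "u = (\<chi> i j. if i = j then 1 else if i = 1 \<and> j = 2 then \<gamma> else 0)"
      unfolding Uplus_def by blast
    have u11: "u$1$1 = 1" "u$1$2 = \<gamma>" "u$2$1 = 0" "u$2$2 = 1" by (simp_all add: u)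
    have p12: "p$1$2 = 0" and pTh: "(p$1$1, p$2$1) \<in> \<Theta>" and pS: "p \<in> SL2O" using p by (auto simp: Pminus_Theta_def)
    have detp: "det p = 1" using pS by (simp add: SL2O_def SL2_def)
    have pv: "absv (p$1$1) \<le> 1" "absv (p$2$2) \<le> 1" using pS by (auto simp: SL2O_def valring_def)
    have pp: "p$1$1 * p$2$2 = 1" using detp p12 by (simp add: det_2)
    hence "absv (p$1$1) * absv (p$2$2) = 1" by (metis absv_1 absv_mult)
    moreover have "absv (p$1$1) * absv (p$2$2) \<le> absv (p$1$1)"
      using mult_left_mono[OF pv(2) absv_nonneg[of "p$1$1"]] by simp
    ultimately have ap: "absv (p$1$1) = 1" using pv by linarith
    have p110: "p$1$1 \<noteq> 0" using ap by auto
    have ipn: "inverse \<pi> ^ n * \<pi> ^ n = 1" using pi0 by (simp add: power_mult_distrib[symmetric])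
    have dau: "det (a_n \<pi> n) = 1" "det u = 1"
      by (simp_all add: det_2 u11 ipn)
    have e: "g$1$1 = p$1$1 * inverse \<pi> ^ n" "g$2$1 = p$2$1 * inverse \<pi> ^ n"
      "g$1$2 = p$1$1 * inverse \<pi> ^ n * \<gamma>"
      by (simp_all add: g mmult2 u11 p12)
    have "det g = 1" by (simp add: g det_mul detp dau)
    moreover have "\<pi>^n * g$1$1 = p$1$1" "\<pi>^n * g$2$1 = p$2$1"
      by (simp_all add: e) (metis ipn mult.commute mult.left_commute mult_1_right)+
    moreover have "g$1$2 / g$1$1 = \<gamma>" using p110 pi0 by (simp add: e)
    ultimately show "g \<in> Cset \<pi> \<Theta> D n" using ap pTh ga by (simp add: Cset_def)
  qed
  show "Cset \<pi> \<Theta> D n \<subseteq> PAU \<pi> \<Theta> D n"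
  proof
    fix g assume "g \<in> Cset \<pi> \<Theta> D n"
    hence dg: "det g = 1" and a1: "absv (\<pi>^n * g$1$1) = 1" and th: "(\<pi>^n * g$1$1, \<pi>^n * g$2$1) \<in> \<Theta>"
      and gD: "g$1$2 / g$1$1 \<in> D" by (auto simp: Cset_def)
    define P1 where "P1 = \<pi>^n * g$1$1"
    define P2 where "P2 = \<pi>^n * g$2$1"
    define \<gamma> where "\<gamma> = g$1$2 / g$1$1"
    have P10: "P1 \<noteq> 0" by (metis a1 P1_def absv_0 zero_neq_one)
    have g110: "g$1$1 \<noteq> 0" by (metis P10 P1_def mult_zero_right)
    have P2v: "absv P2 \<le> 1" using norm2_le1[of "(P1,P2)"] th Th P1_def P2_def by auto
    define p where "p = mk2 P1 0 P2 (inverse P1)"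
    define u :: "'k mat2" where "u = (\<chi> i j. if i = j then 1 else if i = 1 \<and> j = 2 then \<gamma> else 0)"
    have u11: "u$1$1 = 1" "u$1$2 = \<gamma>" "u$2$1 = 0" "u$2$2 = 1" by (simp_all add: u_def)
    have "u \<in> Uplus D" using gD unfolding Uplus_def u_def \<gamma>_def by blast
    moreover have "p \<in> Pminus_Theta \<Theta>"
    proof -
      have "det p = 1" using P10 by (simp add: p_def det_2)
      moreover have "\<forall>i j. p$i$j \<in> valring"
      proof -
        have aP1: "absv P1 = 1" using a1 P1_def by simp
        hence "absv (inverse P1) = 1" by (simp add: absv_inverse)
        thus ?thesis using P2v aP1 by (simp add: forall_2 p_def valring_def)
      qed
      ultimately show ?thesis using th by (simp add: Pminus_Theta_def SL2O_def SL2_def p_def P1_def P2_def)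
    qed
    moreover have "g = p ** a_n \<pi> n ** u"
    proof (rule mat2_eqI)
      have g22: "g$2$2 = (1 + g$1$2 * g$2$1) / g$1$1" using dg g110 by (simp add: det_2 field_simps)
      have ipn: "\<And>x. \<pi> ^ n * x * inverse \<pi> ^ n = x" using pi0
        by (metis (no_types, lifting) mult.commute mult.left_commute mult_1_right power_mult_distrib right_inverse power_one)
      have X: "P1 * inverse \<pi> ^ n = g$1$1" "P2 * inverse \<pi> ^ n = g$2$1"
        unfolding P1_def P2_def by (rule ipn)+
      have Y: "inverse P1 * \<pi> ^ n = inverse (g$1$1)"
        using pi0 unfolding P1_def by (simp add: nonzero_inverse_mult_distrib g110)
      show "g$1$1 = (p ** a_n \<pi> n ** u)$1$1" "g$1$2 = (p ** a_n \<pi> n ** u)$1$2"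
        "g$2$1 = (p ** a_n \<pi> n ** u)$2$1" 
        by (simp_all add: mmult2 u11 p_def X \<gamma>_def g110)
      show "g$2$2 = (p ** a_n \<pi> n ** u)$2$2"
        by (simp add: mmult2 u11 p_def X Y \<gamma>_def g22 g110 divide_inverse algebra_simps)
    qed
    ultimately show "g \<in> PAU \<pi> \<Theta> D n" unfolding PAU_def by blast
  qed
qed



definition near :: "real \<Rightarrow> 'k::{finite,field} mat2 \<Rightarrow> bool" where
  "near \<delta> k \<longleftrightarrow> det k = 1 \<and> absv (k$1$1 - 1) \<le> \<delta> \<and> absv (k$1$2) \<le> \<delta> \<and> absv (k$2$1) \<le> \<delta> \<and> absv (k$2$2 - 1) \<le> \<delta>"

lemma ub_add: "absv a \<le> e \<Longrightarrow> absv b \<le> e \<Longrightarrow> absv (a + b::'k::{finite,field} fls) \<le> e"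
  using absv_ultra[of a b] by linarith

lemma ub_diff: "absv a \<le> e \<Longrightarrow> absv b \<le> e \<Longrightarrow> absv (a - b::'k::{finite,field} fls) \<le> e"
  using absv_ultra_diff[of a b] by linarith

lemma ub_mult: "absv a \<le> e \<Longrightarrow> absv b \<le> f \<Longrightarrow> 0 \<le> e \<Longrightarrow> absv (a * b::'k::{finite,field} fls) \<le> e * f"
  by (simp add: absv_mult mult_mono)

lemma Theta_absorb:
  fixes \<Theta> :: "('k::{finite,field} fls \<times> 'k fls) set"
  assumes "is_sphere_ball \<Theta> r" "r < 1" "(v1, v2) \<in> \<Theta>" "absv (w1 - v1) < r" "absv (w2 - v2) < r"
  shows "(w1, w2) \<in> \<Theta>"
proof -
  obtain c where c: "c \<in> sphere1" and Th: "\<Theta> = {v\<in>sphere1. norm2 (fst v - fst c, snd v - snd c) < r}"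
    using assms(1) by (auto simp: is_sphere_ball_def)
  have vS: "max (absv v1) (absv v2) = 1" and vc: "absv (v1 - fst c) < r" "absv (v2 - snd c) < r"
    using assms(3) by (auto simp: Th sphere1_def norm2_def)
  have w1: "w1 = v1 + (w1 - v1)" and w2: "w2 = v2 + (w2 - v2)" by simp_all
  have le1: "absv w1 \<le> 1" "absv w2 \<le> 1"
    using absv_ultra[of v1 "w1 - v1"] absv_ultra[of v2 "w2 - v2"] vS assms(2,4,5) by auto
  have "absv w1 = 1 \<or> absv w2 = 1"
  proof (cases "absv v1 = 1")
    case True
    hence "absv (v1 + (w1 - v1)) = absv v1" using assms(2,4) by (intro absv_strict) auto
    thus ?thesis using True by simp
  next
    case False
    hence v2: "absv v2 = 1" using vS by (auto simp: max_def split: if_splits)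
    hence "absv (v2 + (w2 - v2)) = absv v2" using assms(2,5) by (intro absv_strict) auto
    thus ?thesis using v2 by simp
  qed
  hence "norm2 (w1, w2) = 1" using le1 by (auto simp: norm2_def max_def)
  moreover have "absv (w1 - fst c) < r"
    using absv_ultra[of "w1 - v1" "v1 - fst c"] assms(4) vc by simp
  moreover have "absv (w2 - snd c) < r"
    using absv_ultra[of "w2 - v2" "v2 - snd c"] assms(5) vc by simp
  ultimately show ?thesis by (simp add: Th sphere1_def norm2_def)
qed

lemma D_absorb:
  fixes D :: "'k::{finite,field} fls set"
  assumes "is_field_ball D s" "x \<in> D" "absv (y - x) < s"
  shows "y \<in> D"
proof -
  obtain c where D: "D = {x. absv (x - c) < s}" using assms(1) by (auto simp: is_field_ball_def)
  have "absv (y - c) \<le> max (absv (y - x)) (absv (x - c))" using absv_ultra[of "y - x" "x - c"] by simp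
  thus ?thesis using assms(2,3) by (auto simp: D)
qed

lemma D_bound:
  fixes D :: "'k::{finite,field} fls set"
  assumes "is_field_ball D s" "s < 1"
  shows "\<exists>R\<ge>1. \<forall>x\<in>D. absv x \<le> R"
proof -
  obtain c where D: "D = {x. absv (x - c) < s}" using assms(1) by (auto simp: is_field_ball_def)
  have "absv x \<le> max 1 (absv c)" if "x \<in> D" for x
    using absv_ultra[of "x - c" c] that assms(2) by (auto simp: D)
  thus ?thesis by (intro exI[of _ "max 1 (absv c)"]) auto
qed

lemma ge1_aux: "(a::real) * b = 1 \<Longrightarrow> a \<le> 1 \<Longrightarrow> 0 \<le> b \<Longrightarrow> 1 \<le> b"
  using mult_right_mono[of a 1 b] by simp

lemma C_basic:
  fixes \<pi> :: "'k::{finite,field} fls"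
  assumes pi: "uniformizer \<pi>" and Th: "is_sphere_ball \<Theta> r" and g: "g \<in> Cset \<pi> \<Theta> D n"
  shows "absv (g$1$1) \<ge> 1" "absv (\<pi>^n * g$2$1) \<le> 1" "absv (\<pi> ^ n) \<le> 1" "g$1$1 \<noteq> 0"
proof -
  have q: "real CARD('k) \<ge> 2" by (rule card_ge2)
  have ap: "absv (\<pi> ^ n) = (1 / real CARD('k)) ^ n" using absv_uniformizer[OF pi] by (simp add: absv_power)
  show ap1: "absv (\<pi> ^ n) \<le> 1" unfolding ap using q by (intro power_le_one) auto
  have "absv (\<pi> ^ n) * absv (g$1$1) = 1" using g by (simp add: Cset_def absv_mult)
  thus "absv (g$1$1) \<ge> 1" using ap1 absv_nonneg[of "g$1$1"]
    by (rule ge1_aux)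
  thus "g$1$1 \<noteq> 0" by auto
  have "\<Theta> \<subseteq> sphere1" using Th by (auto simp: is_sphere_ball_def)
  thus "absv (\<pi>^n * g$2$1) \<le> 1" using g norm2_le1 by (force simp: Cset_def)
qed

lemma left_inv:
  fixes \<pi> :: "'k::{finite,field} fls"
  assumes pi: "uniformizer \<pi>" and Th: "is_sphere_ball \<Theta> r" "r < 1" and Dd: "is_field_ball D s"
    and k: "near \<delta> k" and dr: "\<delta> < r" and ds: "\<delta> < s" and g: "g \<in> Cset \<pi> \<Theta> D n"
  shows "k ** g \<in> Cset \<pi> \<Theta> D n"
proof -
  note gb = C_basic[OF pi Th(1) g]
  have dg: "det g = 1" and a1: "absv (\<pi>^n * g$1$1) = 1" and th: "(\<pi>^n * g$1$1, \<pi>^n * g$2$1) \<in> \<Theta>"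
    and gD: "g$1$2 / g$1$1 \<in> D" using g by (auto simp: Cset_def)
  have kk: "det k = 1" "absv (k$1$1 - 1) \<le> \<delta>" "absv (k$1$2) \<le> \<delta>" "absv (k$2$1) \<le> \<delta>" "absv (k$2$2 - 1) \<le> \<delta>"
    using k by (auto simp: near_def)
  have d0: "\<delta> \<ge> 0" using kk(3) absv_nonneg[of "k$1$2"] by linarith
  define P1 where "P1 = \<pi>^n * g$1$1"
  define P2 where "P2 = \<pi>^n * g$2$1"
  have P2v: "absv P2 \<le> 1" using gb P2_def by simp
  have e1: "\<pi>^n * (k ** g)$1$1 - P1 = (k$1$1 - 1) * P1 + k$1$2 * P2"
    by (simp add: mmult2 P1_def P2_def algebra_simps)
  have e2: "\<pi>^n * (k ** g)$2$1 - P2 = k$2$1 * P1 + (k$2$2 - 1) * P2"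
    by (simp add: mmult2 P1_def P2_def algebra_simps)
  have b1: "absv (\<pi>^n * (k ** g)$1$1 - P1) \<le> \<delta>" unfolding e1
    using ub_mult[OF kk(2) order.refl d0, of P1] ub_mult[OF kk(3) P2v d0] a1 P1_def
    by (intro ub_add) auto
  have b2: "absv (\<pi>^n * (k ** g)$2$1 - P2) \<le> \<delta>" unfolding e2
    using ub_mult[OF kk(4) order.refl d0, of P1] ub_mult[OF kk(5) P2v d0] a1 P1_def
    by (intro ub_add) auto
  have th': "(\<pi>^n * (k ** g)$1$1, \<pi>^n * (k ** g)$2$1) \<in> \<Theta>"
    using Theta_absorb[OF Th(1,2) th[folded P1_def P2_def]] b1 b2 dr by auto
  have "absv (P1 + (\<pi>^n * (k ** g)$1$1 - P1)) = absv P1"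
    using b1 dr Th(2) a1 P1_def by (intro absv_strict) auto
  hence a1': "absv (\<pi>^n * (k ** g)$1$1) = 1" using a1 P1_def by simp
  have kg0: "(k ** g)$1$1 \<noteq> 0" using a1' by auto
  have "(k ** g)$1$2 * g$1$1 - g$1$2 * (k ** g)$1$1 = k$1$2 * det g"
    by (simp add: mmult2 det_2 algebra_simps)
  hence E: "(k ** g)$1$2 * g$1$1 - g$1$2 * (k ** g)$1$1 = k$1$2" using dg by simp
  have "(k ** g)$1$2 / (k ** g)$1$1 - g$1$2 / g$1$1 = k$1$2 / ((k ** g)$1$1 * g$1$1)"
    using kg0 gb(4) by (simp add: diff_frac_eq E)
  moreover have "absv (k$1$2 / ((k ** g)$1$1 * g$1$1)) \<le> \<delta>"
  proof -
    have "absv ((k ** g)$1$1) \<ge> 1"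
      using C_basic(3)[OF pi Th(1) g] a1' absv_nonneg[of "(k ** g)$1$1"]
      by (intro ge1_aux[of "absv (\<pi>^n)"]) (simp_all add: absv_mult)
    hence G: "absv ((k ** g)$1$1 * g$1$1) \<ge> 1" using gb(1)
      using mult_mono[of 1 "absv ((k ** g)$1$1)" 1 "absv (g$1$1)"] by (simp add: absv_mult)
    have "absv (k$1$2) / absv ((k ** g)$1$1 * g$1$1) \<le> absv (k$1$2) / 1"
      using G by (intro divide_left_mono) auto
    hence "absv (k$1$2) / absv ((k ** g)$1$1 * g$1$1) \<le> absv (k$1$2)" by simp
    thus ?thesis using kk(3) by (simp add: absv_divide)
  qed
  ultimately have "(k ** g)$1$2 / (k ** g)$1$1 \<in> D"
    using D_absorb[OF Dd gD] ds by auto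
  moreover have "det (k ** g) = 1" by (simp add: det_mul dg kk(1))
  ultimately show ?thesis using th' a1' by (simp add: Cset_def)
qed



lemma right_inv:
  fixes \<pi> :: "'k::{finite,field} fls"
  assumes pi: "uniformizer \<pi>" and Th: "is_sphere_ball \<Theta> r" "r < 1" and Dd: "is_field_ball D s"
    and R1: "R \<ge> 1" and DR: "\<forall>x\<in>D. absv x \<le> R"
    and h: "near \<delta> h" and dr: "R * R * \<delta> < r" and ds: "R * R * \<delta> < s" and g: "g \<in> Cset \<pi> \<Theta> D n"
  shows "g ** h \<in> Cset \<pi> \<Theta> D n"
proof -
  note gb = C_basic[OF pi Th(1) g]
  have dg: "det g = 1" and a1: "absv (\<pi>^n * g$1$1) = 1" and th: "(\<pi>^n * g$1$1, \<pi>^n * g$2$1) \<in> \<Theta>"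
    and gD: "g$1$2 / g$1$1 \<in> D" using g by (auto simp: Cset_def)
  have hh: "det h = 1" "absv (h$1$1 - 1) \<le> \<delta>" "absv (h$1$2) \<le> \<delta>" "absv (h$2$1) \<le> \<delta>" "absv (h$2$2 - 1) \<le> \<delta>"
    using h by (auto simp: near_def)
  have d0: "\<delta> \<ge> 0" using hh(3) absv_nonneg[of "h$1$2"] by linarith
  define B where "B = R * R * \<delta>"
  have RR: "R * R \<ge> 1" using R1 mult_mono[of 1 R 1 R] by simp
  have dB: "\<delta> \<le> B" unfolding B_def using mult_right_mono[OF RR d0] by simp
  have RdB: "R * \<delta> \<le> B" unfolding B_def using mult_right_mono[of 1 R "R * \<delta>"] R1 d0 by (simp add: mult.assoc)
  have Br: "B < r" "B < s" using dr ds B_def by auto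
  have B1: "B < 1" using Br Th(2) by simp
  define \<gamma> where "\<gamma> = g$1$2 / g$1$1"
  have gR: "absv \<gamma> \<le> R" using DR gD \<gamma>_def by auto
  have g12: "g$1$2 = \<gamma> * g$1$1" using gb(4) by (simp add: \<gamma>_def)
  define P1 where "P1 = \<pi>^n * g$1$1"
  define P2 where "P2 = \<pi>^n * g$2$1"
  have aP1: "absv P1 = 1" using a1 P1_def by simp
  have P2v: "absv P2 \<le> 1" using gb P2_def by simp
  define t where "t = h$1$1 + \<gamma> * h$2$1"
  have tb: "absv (t - 1) \<le> B"
  proof -
    have eq: "t - 1 = (h$1$1 - 1) + \<gamma> * h$2$1" by (simp add: t_def)
    have "absv (\<gamma> * h$2$1) \<le> R * \<delta>" using ub_mult[OF gR hh(4)] R1 by simp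
    hence "absv ((h$1$1 - 1) + \<gamma> * h$2$1) \<le> B" using hh(2) dB RdB by (intro ub_add) linarith+
    thus ?thesis unfolding eq .
  qed
  have at: "absv t = 1"
  proof -
    have "absv (1 + (t - 1)) = absv (1::'k fls)" using tb B1 by (intro absv_strict) auto
    thus ?thesis by simp
  qed
  have t0: "t \<noteq> 0" using at by auto
  have e1: "\<pi>^n * (g ** h)$1$1 - P1 = P1 * (t - 1)"
    by (simp add: mmult2 P1_def t_def g12 algebra_simps)
  have b1: "absv (\<pi>^n * (g ** h)$1$1 - P1) \<le> B" unfolding e1 using aP1 tb by (simp add: absv_mult)
  define Q where "Q = \<pi>^n * g$2$2"
  have QR: "absv Q \<le> R"
  proof -
    have "g$1$1 * g$2$2 - g$1$2 * g$2$1 = 1" using dg by (simp add: det_2)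
    hence "g$2$2 = inverse (g$1$1) + \<gamma> * g$2$1" using gb(4) by (simp add: g12 field_simps)
    hence Qe: "Q = \<pi>^n * inverse (g$1$1) + \<gamma> * P2" by (simp add: Q_def P2_def algebra_simps)
    have "absv (\<pi>^n * inverse (g$1$1)) \<le> 1 * 1"
    proof -
      have "inverse (absv (g$1$1)) \<le> 1" using gb(1) by (simp add: inverse_le_1_iff)
      thus ?thesis using gb(3) by (simp add: absv_mult absv_inverse mult_le_one)
    qed
    moreover have "absv (\<gamma> * P2) \<le> R * 1" using ub_mult[OF gR P2v] R1 by simp
    ultimately show ?thesis unfolding Qe using R1 by (intro ub_add) auto
  qed
  have e2: "\<pi>^n * (g ** h)$2$1 - P2 = P2 * (h$1$1 - 1) + Q * h$2$1"
    by (simp add: mmult2 P2_def Q_def algebra_simps)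
  have b2: "absv (\<pi>^n * (g ** h)$2$1 - P2) \<le> B" unfolding e2
  proof (rule ub_add)
    show "absv (P2 * (h$1$1 - 1)) \<le> B" using ub_mult[OF P2v hh(2)] dB by simp
    show "absv (Q * h$2$1) \<le> B" using ub_mult[OF QR hh(4)] R1 RdB by simp
  qed
  have th': "(\<pi>^n * (g ** h)$1$1, \<pi>^n * (g ** h)$2$1) \<in> \<Theta>"
    using Theta_absorb[OF Th(1,2) th[folded P1_def P2_def]] b1 b2 Br by auto
  have "absv (P1 + (\<pi>^n * (g ** h)$1$1 - P1)) = absv P1"
    using b1 B1 aP1 by (intro absv_strict) auto
  hence a1': "absv (\<pi>^n * (g ** h)$1$1) = 1" using aP1 by simp
  define N where "N = h$1$2 + \<gamma> * (h$2$2 - 1) - \<gamma> * (h$1$1 - 1) - \<gamma> * \<gamma> * h$2$1"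
  have f11: "(g ** h)$1$1 = g$1$1 * t" by (simp add: mmult2 t_def g12 algebra_simps)
  have f12: "(g ** h)$1$2 = g$1$1 * (h$1$2 + \<gamma> * h$2$2)" by (simp add: mmult2 g12 algebra_simps)
  have "(g ** h)$1$2 / (g ** h)$1$1 - \<gamma> = (h$1$2 + \<gamma> * h$2$2) / t - \<gamma>"
    unfolding f11 f12 using gb(4) by simp
  also have "\<dots> = N / t" using t0 by (simp add: field_simps N_def t_def)
  finally have rat: "(g ** h)$1$2 / (g ** h)$1$1 - \<gamma> = N / t" .
  have "absv N \<le> B" unfolding N_def
  proof (intro ub_diff ub_add)
    show "absv (h$1$2) \<le> B" using hh(3) dB by simp
    show "absv (\<gamma> * (h$2$2 - 1)) \<le> B" using ub_mult[OF gR hh(5)] R1 RdB by simp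
    show "absv (\<gamma> * (h$1$1 - 1)) \<le> B" using ub_mult[OF gR hh(2)] R1 RdB by simp
    show "absv (\<gamma> * \<gamma> * h$2$1) \<le> B"
      using ub_mult[OF ub_mult[OF gR gR] hh(4)] R1 B_def by simp
  qed
  hence "absv ((g ** h)$1$2 / (g ** h)$1$1 - \<gamma>) < s" unfolding rat using Br at by (simp add: absv_divide)
  hence "(g ** h)$1$2 / (g ** h)$1$1 \<in> D" using D_absorb[OF Dd gD] \<gamma>_def by simp
  moreover have "det (g ** h) = 1" by (simp add: det_mul dg hh(1))
  ultimately show ?thesis using th' a1' by (simp add: Cset_def)
qed



lemma entry_bound:
  fixes x :: "'k::{finite,field} fls"
  assumes "fls_subdegree x \<ge> M \<or> x = 0" "M \<ge> int N"
  shows "absv x \<le> (1 / real CARD('k)) ^ N"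
proof (cases "x = 0")
  case True thus ?thesis by simp
next
  case False
  have q: "real CARD('k) \<ge> 2" by (rule card_ge2)
  have "absv x = real CARD('k) powr (- real_of_int (fls_subdegree x))" using False by (simp add: absv_def)
  also have "\<dots> \<le> real CARD('k) powr (- real N)"
    using assms False q by (intro powr_mono) auto
  also have "\<dots> = (1 / real CARD('k)) ^ N" using q
    by (simp add: powr_minus powr_realpow power_one_over inverse_eq_divide)
  finally show ?thesis .
qed

lemma V_near:
  assumes e0: "0 < \<epsilon>" and e1: "\<epsilon> < (1 / real CARD('k::{finite,field})) ^ N" and N1: "N \<ge> 1"
    and k: "(k::'k mat2) \<in> V_eps \<epsilon>"
  shows "near ((1 / real CARD('k)) ^ N) k"
proof -
  define q where "q = real CARD('k)"
  have q: "q \<ge> 2" unfolding q_def by (rule card_ge2)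
  have "(1/q)^N \<le> (1/q)^1" using q N1 by (intro power_decreasing) auto
  hence nb: "\<not> \<epsilon> > 1 / q" using e1 q_def by simp
  have "log q \<epsilon> < log q ((1/q)^N)" using e0 e1 q q_def by simp
  also have "log q ((1/q)^N) = - real N" using q by (simp add: log_nat_power log_divide)
  finally have "int N \<le> N_eps TYPE('k) \<epsilon>" unfolding N_eps_def q_def by linarith
  moreover have kS: "k \<in> SL2O" and kc: "\<forall>i j. fls_subdegree (k$i$j - (if i = j then 1 else 0)) \<ge> N_eps TYPE('k) \<epsilon>
                          \<or> k$i$j - (if i = j then 1 else 0) = 0"
    using k nb by (auto simp: V_eps_def q_def)
  ultimately have A: "\<forall>i j. absv (k$i$j - (if i = j then 1 else 0)) \<le> (1 / q) ^ N"
    unfolding q_def by (metis entry_bound)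
  moreover have "det k = 1" using kS by (simp add: SL2O_def SL2_def)
  ultimately show ?thesis unfolding near_def q_def
    using A[rule_format, of 1 1] A[rule_format, of 1 2] A[rule_format, of 2 1] A[rule_format, of 2 2]
    unfolding q_def by simp
qed

lemma one_in_V: "(mat 1 :: 'k::{finite,field} mat2) \<in> V_eps \<epsilon>"
proof -
  have "det (mat 1::'k mat2) = 1" by simp
  moreover have "\<forall>i j. (mat 1::'k mat2)$i$j \<in> valring" by (simp add: mat_def valring_def)
  ultimately have "(mat 1 :: 'k mat2) \<in> SL2O" by (simp add: SL2O_def SL2_def)
  thus ?thesis by (auto simp: V_eps_def mat_def)
qed

definition adj2 :: "'k::{finite,field} mat2 \<Rightarrow> 'k mat2" where
  "adj2 k = mk2 (k$2$2) (- k$1$2) (- k$2$1) (k$1$1)"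

lemma near_adj2: "near \<delta> k \<Longrightarrow> near \<delta> (adj2 k)"
  by (simp add: near_def adj2_def det_2 mult.commute)

lemma adj2_inv: "det k = 1 \<Longrightarrow> k ** adj2 k = mat 1" "det k = 1 \<Longrightarrow> adj2 k ** k = mat 1"
  by (auto intro!: mat2_eqI simp: mmult2 adj2_def det_2 mat_def algebra_simps)

lemma thick_thin:
  fixes B :: "'k::{finite,field} mat2 set"
  assumes V: "\<And>k::'k mat2. k \<in> V_eps \<epsilon> \<Longrightarrow> near \<delta> k"
    and cl: "\<And>(k::'k mat2) (h::'k mat2) b. near \<delta> k \<Longrightarrow> near \<delta> h \<Longrightarrow> b \<in> B \<Longrightarrow> k ** b ** h \<in> B"
  shows "thicken \<epsilon> B = B" "thin \<epsilon> B = B"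
proof -
  have I: "(mat 1 :: 'k mat2) \<in> V_eps \<epsilon>" by (rule one_in_V)
  show "thicken \<epsilon> B = B"
  proof
    show "thicken \<epsilon> B \<subseteq> B"
    proof
      fix x assume "x \<in> thicken \<epsilon> B"
      then obtain g b h where "x = g ** b ** h" "g \<in> V_eps \<epsilon>" "b \<in> B" "h \<in> V_eps \<epsilon>"
        unfolding thicken_def by blast
      thus "x \<in> B" using V cl by blast
    qed
    show "B \<subseteq> thicken \<epsilon> B"
    proof
      fix b assume "b \<in> B"
      hence "b = mat 1 ** b ** mat 1 \<and> (mat 1 :: 'k mat2) \<in> V_eps \<epsilon> \<and> b \<in> B \<and> (mat 1 :: 'k mat2) \<in> V_eps \<epsilon>" using I by simp
      thus "b \<in> thicken \<epsilon> B" unfolding thicken_def by blast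
    qed
  qed
  show "thin \<epsilon> B = B"
  proof
    show "thin \<epsilon> B \<subseteq> B"
    proof
      fix x assume "x \<in> thin \<epsilon> B"
      hence "x \<in> (\<lambda>b. mat 1 ** b ** mat 1) ` B" using I unfolding thin_def by blast
      thus "x \<in> B" by auto
    qed
    show "B \<subseteq> thin \<epsilon> B"
    proof
      fix x assume x: "x \<in> B"
      have "x \<in> (\<lambda>b. g ** b ** h) ` B" if g: "g \<in> V_eps \<epsilon>" and h: "h \<in> V_eps \<epsilon>" for g h
      proof -
        have ng: "near \<delta> g" and nh: "near \<delta> h" using V g h by auto
        have dg: "det g = 1" and dh: "det h = 1" using ng nh by (auto simp: near_def)
        have "adj2 g ** x ** adj2 h \<in> B" using cl near_adj2 ng nh x by blast
        moreover have "g ** (adj2 g ** x ** adj2 h) ** h = (g ** adj2 g) ** x ** (adj2 h ** h)"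
          by (simp add: matrix_mul_assoc)
        hence "g ** (adj2 g ** x ** adj2 h) ** h = x" by (simp add: adj2_inv dg dh)
        ultimately show ?thesis by (metis image_eqI)
      qed
      thus "x \<in> thin \<epsilon> B" unfolding thin_def by blast
    qed
  qed
qed

theorem proposition4p2:
  fixes \<mu> :: "'k::{finite,field} mat2 measure"
    and \<pi> :: "'k fls"
    and \<Theta> :: "('k fls \<times> 'k fls) set"
    and D :: "'k fls set"
    and r s :: real
  assumes "haar_SL2 \<mu>"
    and "uniformizer \<pi>"
    and "is_sphere_ball \<Theta> r" and "r < 1"
    and "is_field_ball D s" and "s < 1"
  shows "\<exists>\<epsilon>0>0. \<exists>n0::nat. \<forall>\<epsilon> n. 0 < \<epsilon> \<and> \<epsilon> < \<epsilon>0 \<and> n0 \<le> n \<longrightarrow>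
           emeasure \<mu> (thicken \<epsilon> (PAU \<pi> \<Theta> D n)) \<le> emeasure \<mu> (thin \<epsilon> (PAU \<pi> \<Theta> D n))"
proof -
  note pi = assms(2) and Th = assms(3,4) and Dd = assms(5)
  obtain R where R1: "R \<ge> 1" and DR: "\<forall>x\<in>D. absv x \<le> R" using D_bound[OF assms(5,6)] by blast
  define q where "q = real CARD('k)"
  have q: "q \<ge> 2" unfolding q_def by (rule card_ge2)
  have rs: "r > 0" "s > 0" using assms(3,5) by (auto simp: is_sphere_ball_def is_field_ball_def)
  have RR: "R * R \<ge> 1" using R1 mult_mono[of 1 R 1 R] by simp
  have "min r s / (R * R) > 0" using rs RR by simp
  then obtain N0 where N0: "(1/q)^N0 < min r s / (R * R)" using q real_arch_pow_inv[of "min r s / (R*R)" "1/q"] by auto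
  define N where "N = Suc N0"
  define \<delta> where "\<delta> = (1/q)^N"
  have "\<delta> \<le> (1/q)^N0" unfolding \<delta>_def N_def using q by (intro power_decreasing) auto
  hence "\<delta> < min r s / (R * R)" using N0 by simp
  hence dRR: "R * R * \<delta> < r" "R * R * \<delta> < s" using RR by (simp_all add: field_simps)
  have d0: "\<delta> > 0" unfolding \<delta>_def using q by simp
  have dle: "\<delta> \<le> R * R * \<delta>" using mult_right_mono[OF RR] d0 by simp
  have Ths: "\<Theta> \<subseteq> sphere1" using assms(3) by (auto simp: is_sphere_ball_def)
  show ?thesis
  proof (intro exI[of _ \<delta>] conjI exI[of _ 0] allI impI)
    show "\<delta> > 0" by (rule d0)
    fix \<epsilon> n assume en: "0 < \<epsilon> \<and> \<epsilon> < \<delta> \<and> (0::nat) \<le> n"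
    have V: "near \<delta> k" if "k \<in> V_eps \<epsilon>" for k :: "'k mat2"
    proof -
      have "near ((1 / real CARD('k)) ^ N) k"
        by (rule V_near) (use en that in \<open>auto simp: \<delta>_def q_def N_def\<close>)
      thus ?thesis by (simp add: \<delta>_def q_def)
    qed
    have cl: "k ** b ** h \<in> Cset \<pi> \<Theta> D n" if "near \<delta> k" "near \<delta> h" "b \<in> Cset \<pi> \<Theta> D n" for k h b
    proof -
      have "k ** b \<in> Cset \<pi> \<Theta> D n"
        using left_inv[OF pi Th Dd that(1) _ _ that(3)] dRR dle by linarith
      thus ?thesis using right_inv[OF pi Th Dd R1 DR that(2) dRR] by blast
    qed
    have "thicken \<epsilon> (Cset \<pi> \<Theta> D n) = thin \<epsilon> (Cset \<pi> \<Theta> D n)"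
      using thick_thin[OF V cl] by simp
    thus "emeasure \<mu> (thicken \<epsilon> (PAU \<pi> \<Theta> D n)) \<le> emeasure \<mu> (thin \<epsilon> (PAU \<pi> \<Theta> D n))"
      using PAU_eq[OF pi Ths] by simp
  qed
qed

end
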